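(* Let $\mathbb H=\mathbb{R}\times\mathbb{R}_{>0}$ and define $L:\mathbb H\to\mathbb{R}_{>0}$ by $L(a,b)=\frac32b+a$ if $\frac ab\ge-1$ and $L(a,b)=-\frac{b^2}{2a}$ if $\frac ab\le-1$. Then for all $v_1,v_2\in\mathbb H$, $L(v_1+v_2)\le L(v_1)+L(v_2)$, and $L(kv)=kL(v)$ for all $v\in\mathbb H$ and $k>0$. *)

theory Defs
  imports Complex_Main "HOL-Analysis.Product_Vector"
begin

definition H :: "(real \<times> real) set" where
  "H = {(a, b). b > 0}"

definition L :: "real \<times> real \<Rightarrow> real" where
  "L v = (let a = fst v; b = snd v in
          if a / b \<ge> -1 then 3/2 * b + a else - (b^2) / (2 * a))"

end

theory Submission
  imports Defs
begin

lemma comb: "(x::real) = p + q \<Longrightarrow> p \<le> y \<Longrightarrow> q \<le> z \<Longrightarrow> x \<le> y + z"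
  by simp

lemma Lab: "L (a,b) = (if a / b \<ge> -1 then 3/2 * b + a else - (b^2) / (2 * a))"
  by (simp add: L_def)

lemma lin1: assumes "b > 0" shows "L (a,b) \<ge> a + 3/2*b"
proof (cases "a / b \<ge> -1")
  case True thus ?thesis by (simp add: Lab)
next
  case False
  hence a: "a < -b" using assms by (auto simp: le_divide_eq)
  hence "(2*a+b)*(a+b) \<ge> 0" using assms by (intro mult_nonpos_nonpos) auto
  hence "- (b^2) / (2 * a) \<ge> a + 3/2*b" using a assms
    by (simp add: field_simps power2_eq_square)
  thus ?thesis using False by (simp add: Lab)
qed

lemma lin2: assumes "b > 0" "-1 \<le> c" "c < 0" shows "L (a,b) \<ge> c^2*a/2 - c*b"
proof (cases "a / b \<ge> -1")
  case True
  hence a: "a \<ge> -b" using assms by (simp add: le_divide_eq)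
  have "c^2 \<le> 1" proof -
    have "\<bar>c\<bar> \<le> 1" using assms by simp
    hence "\<bar>c\<bar>^2 \<le> 1^2" by (intro power_mono) auto
    thus ?thesis by simp
  qed
  hence "a*(1-c^2/2) \<ge> -b*(1-c^2/2)" using a by (intro mult_right_mono) auto
  moreover have "b*(1+c)^2/2 \<ge> 0" using assms by simp
  ultimately have "3/2*b + a \<ge> c^2*a/2 - c*b"
    by (simp add: algebra_simps power2_eq_square)
  thus ?thesis using True by (simp add: Lab)
next
  case False
  hence a: "a < -b" using assms by (auto simp: le_divide_eq)
  have na: "-2*a > 0" using a assms by simp
  have "(c^2*a/2 - c*b) * (-2*a) \<le> (- (b^2) / (2 * a)) * (-2*a)"
  proof -
    have "(c^2*a/2 - c*b) * (-2*a) = b^2 - (b - a*c)^2" by (simp add: algebra_simps power2_eq_square)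
    also have "\<dots> \<le> b^2" by simp
    also have "b^2 = (- (b^2) / (2 * a)) * (-2*a)" using na by (simp add: field_simps)
    finally show ?thesis .
  qed
  hence "- (b^2) / (2 * a) \<ge> c^2*a/2 - c*b" using na by (simp only: mult_le_cancel_right_pos)
  thus ?thesis using False by (simp add: Lab)
qed

lemma tight: assumes "b > 0"
  shows "(a / b \<ge> -1 \<and> L (a,b) = a + 3/2*b) \<or>
         (-1 \<le> b/a \<and> b/a < 0 \<and> L (a,b) = (b/a)^2*a/2 - (b/a)*b)"
proof (cases "a / b \<ge> -1")
  case True thus ?thesis by (simp add: Lab)
next
  case False
  hence a: "a < -b" using assms by (auto simp: le_divide_eq)
  hence "-1 \<le> b/a" "b/a < 0" using assms by (auto simp: le_divide_eq divide_less_0_iff)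
  moreover have "- (b^2) / (2 * a) = (b/a)^2*a/2 - (b/a)*b" using a assms
    by (simp add: field_simps power2_eq_square)
  ultimately show ?thesis using False by (simp add: Lab)
qed

theorem lemma5p3:
  shows "(\<forall>v1\<in>H. \<forall>v2\<in>H. L (v1 + v2) \<le> L v1 + L v2)
         \<and> (\<forall>v\<in>H. \<forall>k::real. k > 0 \<longrightarrow> L (k *\<^sub>R v) = k * L v)"
proof safe
  fix v1 v2 assume "v1 \<in> H" "v2 \<in> H"
  then obtain a1 b1 a2 b2 where v: "v1 = (a1,b1)" "v2 = (a2,b2)" "b1 > 0" "b2 > 0"
    by (cases v1, cases v2) (auto simp: H_def)
  have s: "v1 + v2 = (a1+a2, b1+b2)" using v by simp
  from tight[OF add_pos_pos[OF v(3) v(4)], of "a1+a2"]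
  show "L (v1 + v2) \<le> L v1 + L v2"
  proof
    assume h: "(a1+a2)/(b1+b2) \<ge> -1 \<and> L (a1+a2,b1+b2) = (a1+a2) + 3/2*(b1+b2)"
    show ?thesis unfolding s unfolding v(1,2) using conjunct2[OF h] lin1[OF v(3), of a1] lin1[OF v(4), of a2]
      by (intro comb[of _ "a1 + 3/2*b1" "a2 + 3/2*b2"]) (auto simp: algebra_simps)
  next
    define c where "c = (b1+b2)/(a1+a2)"
    assume h: "-1 \<le> (b1+b2)/(a1+a2) \<and> (b1+b2)/(a1+a2) < 0 \<and>
        L (a1+a2,b1+b2) = ((b1+b2)/(a1+a2))^2*(a1+a2)/2 - ((b1+b2)/(a1+a2))*(b1+b2)"
    hence "-1 \<le> c" "c < 0" "L (a1+a2,b1+b2) = c^2*(a1+a2)/2 - c*(b1+b2)"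
      by (auto simp: c_def)
    thus ?thesis using lin2[OF v(3) \<open>-1\<le>c\<close> \<open>c<0\<close>, of a1] lin2[OF v(4) \<open>-1\<le>c\<close> \<open>c<0\<close>, of a2]
      unfolding s unfolding v(1,2)
      by (intro comb[of _ "c^2*a1/2 - c*b1" "c^2*a2/2 - c*b2"]) (auto simp: algebra_simps)
  qed
next
  fix v :: "real \<times> real" and k :: real assume "v \<in> H" "k > 0"
  then obtain a b where v: "v = (a,b)" "b > 0" by (cases v) (auto simp: H_def)
  have "(k*a)/(k*b) = a/b" using \<open>k>0\<close> by simp
  thus "L (k *\<^sub>R v) = k * L v" using v \<open>k>0\<close>
    by (simp add: Lab power2_eq_square field_simps)
qed

end
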